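(* Let $\kappa\ge 2$. If $L_1,\dots,L_t$ are Latin squares of order $\kappa$ such that $L_a$ and $L_b$ are projective for all $a\neq b$, then $t \leq \kappa - 1$.
   Context: A Latin square of order $\kappa$ is a $\kappa\times\kappa$ matrix with entries from $\{1,\dots,\kappa\}$ in which each symbol occurs exactly once in each row and each column. Two Latin squares $L_1=[l^{(1)}_{ij}]$ and $L_2=[l^{(2)}_{ij}]$ of order $\kappa$ are called projective if both have all diagonal entries equal to $1$ and, for every row index $r$ and every row index $s$, there is exactly one column index $c$ with $l^{(1)}_{rc} = l^{(2)}_{sc}$. *)

theory Defs
  imports Main
begin

definition latin_square :: "nat \<Rightarrow> (nat \<Rightarrow> nat \<Rightarrow> nat) \<Rightarrow> bool" where
  "latin_square k L \<longleftrightarrow>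
     (\<forall>i<k. \<forall>j<k. L i j \<in> {1..k}) \<and>
     (\<forall>i<k. \<forall>s\<in>{1..k}. \<exists>!j. j < k \<and> L i j = s) \<and>
     (\<forall>j<k. \<forall>s\<in>{1..k}. \<exists>!i. i < k \<and> L i j = s)"

definition projective :: "nat \<Rightarrow> (nat \<Rightarrow> nat \<Rightarrow> nat) \<Rightarrow> (nat \<Rightarrow> nat \<Rightarrow> nat) \<Rightarrow> bool" where
  "projective k L1 L2 \<longleftrightarrow>
     (\<forall>i<k. L1 i i = 1) \<and> (\<forall>i<k. L2 i i = 1) \<and>
     (\<forall>r<k. \<forall>s<k. \<exists>!c. c < k \<and> L1 r c = L2 s c)"

end

theory Submission
  imports Defs
begin

theorem theorem27:
  fixes k t :: nat and L :: "nat \<Rightarrow> nat \<Rightarrow> nat \<Rightarrow> nat"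
  assumes "k \<ge> 2"
    and "\<forall>a<t. latin_square k (L a)"
    and "\<forall>a<t. \<forall>b<t. a \<noteq> b \<longrightarrow> projective k (L a) (L b)"
  shows "t \<le> k - 1"
proof (cases "t \<le> 1")
  case True then show ?thesis using assms(1) by simp
next
  case False
  have diag: "L a 0 0 = 1" if "a < t" for a
  proof -
    obtain b where "b < t" "b \<noteq> a"
    proof (cases "a = 0")
      case True then show ?thesis using False that[of 1] by simp
    next
      case False then show ?thesis using that[of 0] \<open>a < t\<close> by simp
    qed
    then show ?thesis using assms(3) that assms(1) unfolding projective_def by auto
  qed
  have rng: "L a 0 1 \<in> {2..k}" if "a < t" for a
  proof -
    have ls: "latin_square k (L a)" using assms(2) that by blast
    have "L a 0 1 \<in> {1..k}" using ls assms(1) unfolding latin_square_def by auto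
    moreover have "L a 0 1 \<noteq> 1"
    proof
      assume h: "L a 0 1 = 1"
      have "\<exists>!j. j < k \<and> L a 0 j = 1" using ls assms(1) unfolding latin_square_def by auto
      moreover have "0 < k" "1 < k" using assms(1) by auto
      ultimately show False using h diag[OF that] by (metis zero_neq_one)
    qed
    ultimately show ?thesis by auto
  qed
  have inj: "inj_on (\<lambda>a. L a 0 1) {..<t}"
  proof (rule inj_onI)
    fix a b assume ab: "a \<in> {..<t}" "b \<in> {..<t}" "L a 0 1 = L b 0 1"
    show "a = b"
    proof (rule ccontr)
      assume "a \<noteq> b"
      then have "\<exists>!c. c < k \<and> L a 0 c = L b 0 c"
        using assms(3) ab assms(1) unfolding projective_def by auto
      moreover have "L a 0 0 = L b 0 0" using diag ab by auto
      moreover have "0 < k" "1 < k" using assms(1) by auto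
      ultimately show False using ab(3) by (metis zero_neq_one)
    qed
  qed
  have "card ((\<lambda>a. L a 0 1) ` {..<t}) \<le> card {2..k}"
    by (rule card_mono) (use rng in auto)
  then show ?thesis using card_image[OF inj] by simp
qed

end
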